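(* $$\zeta(5) = \frac{\pi^5}{294} - \frac{72}{35} \sum_{n=1}^{\infty} \frac{1}{n^5(e^{2\pi n} - 1)} - \frac{2}{35} \sum_{n=1}^{\infty} \frac{1}{n^5(e^{2\pi n} + 1)}.$$
   Context: $\zeta$ denotes the Riemann zeta function, $\zeta(s)=\sum_{n\ge1} n^{-s}$ for $\operatorname{Re} s>1$. *)

theory Defs
  imports "HOL-Analysis.Analysis"
begin

end

theory Submission
  imports Defs "HOL-Real_Asymp.Real_Asymp"
begin


lemma cot_Digamma:
  fixes z :: complex
  assumes z: "z \<notin> \<int>"
  shows "of_real pi * cot (of_real pi * z) = Digamma (1 - z) - Digamma z"
proof -
  have z1: "z \<notin> \<int>\<^sub>\<le>\<^sub>0" using z nonpos_Ints_subset_Ints by blast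
  have z2: "1 - z \<notin> \<int>\<^sub>\<le>\<^sub>0"
  proof
    assume "1 - z \<in> \<int>\<^sub>\<le>\<^sub>0"
    hence "1 - z \<in> \<int>" using nonpos_Ints_subset_Ints by blast
    hence "1 - (1 - z) \<in> \<int>" by (intro Ints_diff) auto
    thus False using z by simp
  qed
  have d1: "((\<lambda>w. rGamma w * rGamma (1 - w)) has_field_derivative
      (- rGamma z * Digamma z * rGamma (1 - z) + rGamma z * (rGamma (1 - z) * Digamma (1 - z)))) (at z)"
    using z1 z2
    by (auto intro!: derivative_eq_intros has_field_derivative_rGamma_no_nonpos_int)
  have d2: "((\<lambda>w. sin (of_real pi * w) / of_real pi) has_field_derivative cos (of_real pi * z)) (at z)"
    by (auto intro!: derivative_eq_intros)
  have eq: "(\<lambda>w::complex. rGamma w * rGamma (1 - w)) = (\<lambda>w::complex. sin (of_real pi * w) / of_real pi)"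
    by (rule ext) (rule rGamma_reflection_complex)
  from d1 d2 eq have e: "- rGamma z * Digamma z * rGamma (1 - z) + rGamma z * (rGamma (1 - z) * Digamma (1 - z))
      = cos (of_real pi * z)"
    using DERIV_unique by metis
  have s: "sin (of_real pi * z) \<noteq> 0"
  proof
    assume "sin (of_real pi * z) = 0"
    then obtain n :: int where "of_real pi * z = of_real (of_int n * pi)"
      by (auto simp: sin_eq_0)
    hence "z = of_int n" by (simp add: algebra_simps)
    thus False using z by auto
  qed
  have "rGamma z * rGamma (1 - z) * (Digamma (1 - z) - Digamma z) = cos (of_real pi * z)"
    using e by (simp add: algebra_simps)
  hence "sin (of_real pi * z) / of_real pi * (Digamma (1 - z) - Digamma z) = cos (of_real pi * z)"
    by (simp add: rGamma_reflection_complex)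
  thus ?thesis using s by (simp add: cot_def field_simps)
qed

lemma cot_pf:
  fixes z :: complex
  assumes z: "z \<notin> \<int>"
  shows "(\<lambda>k. 2 * z / (z\<^sup>2 - (of_nat (Suc k))\<^sup>2)) sums (of_real pi * cot (of_real pi * z) - 1 / z)"
proof -
  have z0: "z \<noteq> 0" using z by auto
  have z1: "1 - z \<noteq> 0" using z by (metis Ints_1 eq_iff_diff_eq_0)
  have S1: "(\<lambda>k. inverse (of_nat (Suc k)) - inverse ((1 - z) + of_nat k)) sums (Digamma (1 - z) + euler_mascheroni)"
    using summable_Digamma[OF z1] by (simp add: Digamma_def summable_sums)
  have S2: "(\<lambda>k. inverse (of_nat (Suc k)) - inverse (z + of_nat k)) sums (Digamma z + euler_mascheroni)"
    using summable_Digamma[OF z0] by (simp add: Digamma_def summable_sums)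
  have D: "(\<lambda>k. inverse (z + of_nat k) - inverse ((1 - z) + of_nat k)) sums (Digamma (1 - z) - Digamma z)"
    using sums_diff[OF S1 S2] by (simp add: algebra_simps)
  have T: "(\<lambda>k. inverse (z + of_nat k) - inverse (z + of_nat (Suc k))) sums (inverse (z + of_nat 0) - 0)"
    by (intro telescope_sums'[OF filterlim_compose[OF tendsto_inverse_0]]
              tendsto_add_filterlim_at_infinity[OF tendsto_const] tendsto_of_nat)
  have D2: "(\<lambda>k. inverse (z + of_nat (Suc k)) - inverse ((1 - z) + of_nat k)) sums (Digamma (1 - z) - Digamma z - inverse z)"
    using sums_diff[OF D T] by (simp add: algebra_simps)
  have eqk: "inverse (z + of_nat (Suc k)) - inverse ((1 - z) + of_nat k) = 2 * z / (z\<^sup>2 - (of_nat (Suc k))\<^sup>2)" for k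
  proof -
    have a: "z + of_nat (Suc k) \<noteq> 0"
    proof
      assume "z + of_nat (Suc k) = 0"
      hence "z = - of_nat (Suc k)" by (metis add.commute add_eq_0_iff minus_minus)
      thus False using z by (metis Ints_minus Ints_of_nat)
    qed
    have b: "(1 - z) + of_nat k \<noteq> 0"
    proof
      assume "(1 - z) + of_nat k = 0"
      hence "z = of_nat (Suc k)" by (simp add: algebra_simps)
      thus False using z by (metis Ints_of_nat)
    qed
    have c: "z\<^sup>2 - (of_nat (Suc k))\<^sup>2 = - ((z + of_nat (Suc k)) * ((1 - z) + of_nat k))"
      by (simp add: algebra_simps power2_eq_square)
    have d: "inverse (z + of_nat (Suc k)) - inverse ((1 - z) + of_nat k) =
       (((1 - z) + of_nat k) - (z + of_nat (Suc k))) / ((z + of_nat (Suc k)) * ((1 - z) + of_nat k))"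
      using a b by (simp add: field_simps)
    have e: "((1 - z) + of_nat k) - (z + of_nat (Suc k)) = - (2 * z)" by simp
    show ?thesis unfolding d e c by simp
  qed
  show ?thesis using D2 unfolding eqk cot_Digamma[OF z] by (simp add: divide_inverse)
qed

definition Gf :: "complex \<Rightarrow> complex" where
  "Gf z = (1 - of_real pi * z * cot (of_real pi * z)) / (2 * z\<^sup>2)"

lemma G_sums:
  fixes z :: complex
  assumes z: "z \<notin> \<int>"
  shows "(\<lambda>k. 1 / ((of_nat (Suc k))\<^sup>2 - z\<^sup>2)) sums Gf z"
proof -
  have z0: "z \<noteq> 0" using z by auto
  have "(\<lambda>k. 2 * z / (z\<^sup>2 - (of_nat (Suc k))\<^sup>2) * (- 1 / (2 * z))) sums
        ((of_real pi * cot (of_real pi * z) - 1 / z) * (- 1 / (2 * z)))"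
    by (rule sums_mult2[OF cot_pf[OF z]])
  moreover have "2 * z / (z\<^sup>2 - (of_nat (Suc k))\<^sup>2) * (- 1 / (2 * z)) = 1 / ((of_nat (Suc k))\<^sup>2 - z\<^sup>2)" for k
  proof (cases "z\<^sup>2 - (of_nat (Suc k))\<^sup>2 = 0")
    case True thus ?thesis by simp
  next
    case False
    hence "(of_nat (Suc k))\<^sup>2 - z\<^sup>2 \<noteq> 0" by (metis eq_iff_diff_eq_0)
    thus ?thesis using False z0 by (simp add: field_simps)
  qed
  moreover have "(of_real pi * cot (of_real pi * z) - 1 / z) * (- 1 / (2 * z)) = Gf z"
    using z0 by (simp add: Gf_def field_simps power2_eq_square)
  ultimately show ?thesis by simp
qed

lemma pf_aux1:
  fixes a b :: complex
  assumes "a - b \<noteq> 0" "a + b \<noteq> 0" "b \<noteq> 0"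
  shows "(1 / (a - b) - 1 / (a + b)) / (2 * b) = 1 / ((a - b) * (a + b))"
    and "(1 / (a - b) + 1 / (a + b)) / 2 = a / ((a - b) * (a + b))"
proof -
  have P: "(a - b) * (a + b) \<noteq> 0" using assms by simp
  have "1 / (a - b) - 1 / (a + b) = ((a + b) - (a - b)) / ((a - b) * (a + b))"
    using assms by (simp add: diff_frac_eq)
  also have "(a + b) - (a - b) = 2 * b" by simp
  finally show "(1 / (a - b) - 1 / (a + b)) / (2 * b) = 1 / ((a - b) * (a + b))"
    using assms P by simp
  have "1 / (a - b) + 1 / (a + b) = ((a + b) + (a - b)) / ((a - b) * (a + b))"
    using assms by (simp add: add_frac_eq)
  also have "(a + b) + (a - b) = 2 * a" by simp
  finally show "(1 / (a - b) + 1 / (a + b)) / 2 = a / ((a - b) * (a + b))"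
    using assms P by simp
qed

lemma quartic_sums_complex:
  fixes w :: complex
  assumes w: "w \<notin> \<int>" and iw: "\<i> * w \<notin> \<int>"
  shows "(\<lambda>k. 1 / ((of_nat (Suc k))^4 - w^4)) sums ((Gf w - Gf (\<i> * w)) / (2 * w\<^sup>2))"
    and "(\<lambda>k. (of_nat (Suc k))\<^sup>2 / ((of_nat (Suc k))^4 - w^4)) sums ((Gf w + Gf (\<i> * w)) / 2)"
proof -
  have w0: "w \<noteq> 0" using w by auto
  have iw2: "(\<i> * w)\<^sup>2 = - w\<^sup>2" by (simp add: power_mult_distrib)
  have ne1: "(of_nat (Suc k))\<^sup>2 - w\<^sup>2 \<noteq> (0::complex)" for k
  proof
    assume "(of_nat (Suc k))\<^sup>2 - w\<^sup>2 = (0::complex)"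
    hence "(w - of_nat (Suc k)) * (w + of_nat (Suc k)) = 0" by (simp add: algebra_simps power2_eq_square)
    hence "w = of_nat (Suc k) \<or> w = - of_nat (Suc k)" by (auto simp: add_eq_0_iff2)
    thus False using w by (metis Ints_minus Ints_of_nat)
  qed
  have ne2: "(of_nat (Suc k))\<^sup>2 + w\<^sup>2 \<noteq> (0::complex)" for k
  proof
    assume "(of_nat (Suc k))\<^sup>2 + w\<^sup>2 = (0::complex)"
    hence "(of_nat (Suc k))\<^sup>2 - (\<i> * w)\<^sup>2 = (0::complex)" using iw2 by simp
    hence "(\<i> * w - of_nat (Suc k)) * (\<i> * w + of_nat (Suc k)) = 0" by (simp add: algebra_simps power2_eq_square)
    hence "\<i> * w = of_nat (Suc k) \<or> \<i> * w = - of_nat (Suc k)" by (auto simp: add_eq_0_iff2)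
    thus False using iw by (metis Ints_minus Ints_of_nat)
  qed
  have fac: "(of_nat (Suc k))^4 - w^4 = ((of_nat (Suc k))\<^sup>2 - w\<^sup>2) * ((of_nat (Suc k))\<^sup>2 + w\<^sup>2)" for k :: nat
    by (simp add: algebra_simps power2_eq_square power4_eq_xxxx)
  have A: "(\<lambda>k. 1 / ((of_nat (Suc k))\<^sup>2 - w\<^sup>2)) sums Gf w" by (rule G_sums[OF w])
  have B: "(\<lambda>k. 1 / ((of_nat (Suc k))\<^sup>2 + w\<^sup>2)) sums Gf (\<i> * w)"
    using G_sums[OF iw] unfolding iw2 by simp
  have "(\<lambda>k. (1 / ((of_nat (Suc k))\<^sup>2 - w\<^sup>2) - 1 / ((of_nat (Suc k))\<^sup>2 + w\<^sup>2)) / (2 * w\<^sup>2)) sums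
     ((Gf w - Gf (\<i> * w)) / (2 * w\<^sup>2))"
    by (intro sums_divide sums_diff A B)
  moreover have "(\<lambda>k. (1 / ((of_nat (Suc k))\<^sup>2 - w\<^sup>2) - 1 / ((of_nat (Suc k))\<^sup>2 + w\<^sup>2)) / (2 * w\<^sup>2))
     = (\<lambda>k. 1 / ((of_nat (Suc k))^4 - w^4))"
    unfolding fac using ne1 ne2 w0 by (intro ext pf_aux1) auto
  ultimately show "(\<lambda>k. 1 / ((of_nat (Suc k))^4 - w^4)) sums ((Gf w - Gf (\<i> * w)) / (2 * w\<^sup>2))" by (simp only:)
  have "(\<lambda>k. (1 / ((of_nat (Suc k))\<^sup>2 - w\<^sup>2) + 1 / ((of_nat (Suc k))\<^sup>2 + w\<^sup>2)) / 2) sums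
     ((Gf w + Gf (\<i> * w)) / 2)"
    by (intro sums_divide sums_add A B)
  moreover have "(\<lambda>k. (1 / ((of_nat (Suc k))\<^sup>2 - w\<^sup>2) + 1 / ((of_nat (Suc k))\<^sup>2 + w\<^sup>2)) / 2)
     = (\<lambda>k. (of_nat (Suc k))\<^sup>2 / ((of_nat (Suc k))^4 - w^4))"
    unfolding fac using ne1 ne2 w0 by (intro ext pf_aux1) auto
  ultimately show "(\<lambda>k. (of_nat (Suc k))\<^sup>2 / ((of_nat (Suc k))^4 - w^4)) sums ((Gf w + Gf (\<i> * w)) / 2)" by (simp only:)
qed

lemma quartic_sums_real:
  fixes c K :: real
  assumes c: "c > 0"
    and h1: "cot (of_real pi * (of_real c * (1 + \<i>))) = - \<i> * of_real K"
    and h2: "cot (of_real pi * (\<i> * (of_real c * (1 + \<i>)))) = - \<i> * of_real K"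
  shows "(\<lambda>k. 1 / ((real (Suc k))^4 + 4 * c^4)) sums ((pi * c * K - 1) / (8 * c^4))"
    and "(\<lambda>k. (real (Suc k))\<^sup>2 / ((real (Suc k))^4 + 4 * c^4)) sums (pi * K / (4 * c))"
proof -
  define w where "w = of_real c * (1 + \<i>)"
  have notint: "z \<notin> \<int>" if "Im z \<noteq> 0" for z :: complex
    using that by (auto elim!: Ints_cases)
  have w: "w \<notin> \<int>" using c by (intro notint) (simp add: w_def)
  have iw: "\<i> * w \<notin> \<int>" using c by (intro notint) (simp add: w_def)
  have w4: "w^4 = - of_real (4 * c^4)"
    by (simp add: w_def power_mult_distrib power4_eq_xxxx algebra_simps)
  have w2: "w\<^sup>2 = 2 * \<i> * of_real (c\<^sup>2)"
    by (simp add: w_def power_mult_distrib power2_eq_square algebra_simps)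
  have iw2: "(\<i> * w)\<^sup>2 = - (2 * \<i> * of_real (c\<^sup>2))"
    by (simp add: w2 power_mult_distrib)
  have c0: "complex_of_real c \<noteq> 0" using c by simp
  have Gw: "Gf w = (1 + \<i> * of_real pi * w * of_real K) / (4 * \<i> * of_real (c\<^sup>2))"
    unfolding Gf_def w2 using h1 by (simp add: w_def algebra_simps)
  have Giw: "Gf (\<i> * w) = (1 - of_real pi * w * of_real K) / (- (4 * \<i> * of_real (c\<^sup>2)))"
    unfolding Gf_def iw2 using h2 by (simp add: w_def algebra_simps)
  have E1: "(Gf w - Gf (\<i> * w)) / (2 * w\<^sup>2) = of_real ((pi * c * K - 1) / (8 * c^4))"
  proof -
    have n: "(1 + \<i> * of_real pi * w * of_real K) + (1 - of_real pi * w * of_real K) = of_real (2 - 2 * pi * c * K)"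
      by (simp add: w_def algebra_simps)
    have "Gf w - Gf (\<i> * w) = ((1 + \<i> * of_real pi * w * of_real K) + (1 - of_real pi * w * of_real K)) / (4 * \<i> * of_real (c\<^sup>2))"
      unfolding Gw Giw by (simp add: diff_divide_distrib add_divide_distrib)
    also have "\<dots> = of_real (2 - 2 * pi * c * K) / (4 * \<i> * of_real (c\<^sup>2))" unfolding n ..
    finally have "(Gf w - Gf (\<i> * w)) / (2 * w\<^sup>2) = of_real (2 - 2 * pi * c * K) / ((4 * \<i> * of_real (c\<^sup>2)) * (4 * \<i> * of_real (c\<^sup>2)))"
      unfolding w2 by (simp add: mult.assoc)
    also have "(4 * \<i> * of_real (c\<^sup>2)) * (4 * \<i> * of_real (c\<^sup>2)) = of_real (- 16 * c^4)"
      by (simp add: algebra_simps power2_eq_square power4_eq_xxxx)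
    also have "(of_real (2 - 2 * pi * c * K) :: complex) / of_real (- 16 * c^4) = of_real ((pi * c * K - 1) / (8 * c^4))"
    proof -
      have "(2 - 2 * pi * c * K) / (- 16 * c^4) = (pi * c * K - 1) / (8 * c^4)"
        using c by (simp add: field_simps)
      thus ?thesis by (metis of_real_divide)
    qed
    finally show ?thesis .
  qed
  have E2: "(Gf w + Gf (\<i> * w)) / 2 = of_real (pi * K / (4 * c))"
    unfolding Gw Giw using c0
    by (simp add: w_def field_simps power2_eq_square complex_eq_iff)
  have T1: "1 / ((of_nat (Suc k))^4 - w^4) = of_real (1 / ((real (Suc k))^4 + 4 * c^4))" for k
    unfolding w4 by simp
  have T2: "(of_nat (Suc k))\<^sup>2 / ((of_nat (Suc k))^4 - w^4) = of_real ((real (Suc k))\<^sup>2 / ((real (Suc k))^4 + 4 * c^4))" for k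
    unfolding w4 by simp
  from quartic_sums_complex(1)[OF w iw] show "(\<lambda>k. 1 / ((real (Suc k))^4 + 4 * c^4)) sums ((pi * c * K - 1) / (8 * c^4))"
    unfolding T1 E1 sums_of_real_iff .
  from quartic_sums_complex(2)[OF w iw] show "(\<lambda>k. (real (Suc k))\<^sup>2 / ((real (Suc k))^4 + 4 * c^4)) sums (pi * K / (4 * c))"
    unfolding T2 E2 sums_of_real_iff .
qed

lemma cos_i_real: "cos (\<i> * complex_of_real y) = of_real (cosh y)"
  by (simp add: cos_i_times cosh_def exp_of_real exp_minus field_simps)

lemma sin_i_real: "sin (\<i> * complex_of_real y) = \<i> * of_real (sinh y)"
  by (simp add: sin_i_times sinh_def exp_of_real exp_minus field_simps)

lemma cot_sin0:
  fixes a y :: real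
  assumes "sin a = 0"
  shows "cot (of_real a + \<i> * of_real y) = - \<i> * of_real (cosh y / sinh y)"
proof -
  have ca: "cos a = 1 \<or> cos a = -1" using assms sin_cos_squared_add[of a]
    by (metis abs_le_D1 cos_ge_minus_one cos_le_one diff_0_right power2_eq_1_iff sin_cos_squared_add3 zero_power2 add_0)
  have s: "sin (of_real a + \<i> * of_real y) = of_real (cos a) * (\<i> * of_real (sinh y))"
    by (simp add: sin_add sin_of_real cos_of_real assms cos_i_real sin_i_real)
  have c: "cos (of_real a + \<i> * of_real y) = of_real (cos a) * of_real (cosh y)"
    by (simp add: cos_add sin_of_real cos_of_real assms cos_i_real sin_i_real)
  show ?thesis unfolding cot_def s c using ca
    by (cases "sinh y = 0") (auto simp: field_simps)
qed

lemma cot_cos0: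
  fixes a y :: real
  assumes "cos a = 0"
  shows "cot (of_real a + \<i> * of_real y) = - \<i> * of_real (sinh y / cosh y)"
proof -
  have sa: "sin a = 1 \<or> sin a = -1" using assms sin_cos_squared_add[of a]
    by (metis power2_eq_1_iff add_0_right zero_power2)
  have s: "sin (of_real a + \<i> * of_real y) = of_real (sin a) * of_real (cosh y)"
    by (simp add: sin_add sin_of_real cos_of_real assms cos_i_real sin_i_real)
  have c: "cos (of_real a + \<i> * of_real y) = - of_real (sin a) * (\<i> * of_real (sinh y))"
    by (simp add: cos_add sin_of_real cos_of_real assms cos_i_real sin_i_real)
  have ch: "cosh y \<noteq> 0" by (metis cosh_real_pos less_irrefl)
  show ?thesis unfolding cot_def s c using sa ch
    by (auto simp: field_simps)
qed

lemma double_swap: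
  fixes f :: "nat \<Rightarrow> nat \<Rightarrow> real"
  assumes nn: "\<And>k l. f k l \<ge> 0"
    and rows: "\<And>k. f k sums r k" and sr: "summable r"
    and cols: "\<And>l. (\<lambda>k. f k l) sums c l"
  shows "c sums (suminf r)"
proof -
  have rnn: "r k \<ge> 0" for k using rows[of k] nn by (metis sums_iff suminf_nonneg)
  have cnn: "c l \<ge> 0" for l using cols[of l] nn by (metis sums_iff suminf_nonneg)
  have hr: "(f k has_sum r k) UNIV" for k by (rule sums_nonneg_imp_has_sum[OF rows nn])
  have hc: "((\<lambda>k. f k l) has_sum c l) UNIV" for l by (rule sums_nonneg_imp_has_sum[OF cols]) (rule nn)
  have rs: "r summable_on UNIV" using summable_nonneg_imp_summable_on[OF sr rnn] .
  have S: "(\<lambda>(k, l). f k l) summable_on Sigma UNIV (\<lambda>_. UNIV)"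
    by (rule summable_on_SigmaI[where g = r]) (use hr rs nn in auto)
  hence S': "(\<lambda>(k, l). f k l) summable_on (UNIV \<times> UNIV)" by simp
  have "infsum (\<lambda>k. infsum (\<lambda>l. f k l) UNIV) UNIV = infsum (\<lambda>l. infsum (\<lambda>k. f k l) UNIV) UNIV"
    by (rule infsum_swap_banach[OF S'])
  moreover have "infsum (\<lambda>l. f k l) UNIV = r k" for k using hr[of k] by (simp add: infsumI)
  moreover have "infsum (\<lambda>k. f k l) UNIV = c l" for l using hc[of l] by (simp add: infsumI)
  ultimately have eq: "infsum r UNIV = infsum c UNIV" by simp
  have S2: "(\<lambda>(l, k). f k l) summable_on (UNIV \<times> UNIV)"
    using S' summable_on_swap[of "\<lambda>(k, l). f k l" UNIV UNIV] by (simp only: case_prod_unfold fst_conv snd_conv)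
  have "(\<lambda>l. infsum (\<lambda>k. f k l) UNIV) summable_on UNIV"
    using summable_on_SigmaD[of "\<lambda>(l, k). f k l" UNIV "\<lambda>_. UNIV"] S2 hc
    by (auto simp: summable_on_def)
  moreover have "(\<lambda>l. infsum (\<lambda>k. f k l) UNIV) = c" using hc by (intro ext infsumI)
  ultimately have cs: "c summable_on UNIV" by simp
  hence scs: "summable c" by (rule summable_on_imp_summable)
  have "infsum c UNIV = suminf c"
    using sums_nonneg_imp_has_sum[OF summable_sums[OF scs] cnn] by (simp add: infsumI)
  moreover have "infsum r UNIV = suminf r"
    using sums_nonneg_imp_has_sum[OF summable_sums[OF sr] rnn] by (simp add: infsumI)
  ultimately show ?thesis using eq scs by (metis summable_sums)
qed



definition ctn :: "real \<Rightarrow> real" where "ctn y = cosh y / sinh y"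

lemma notint_Im: "Im z \<noteq> 0 \<Longrightarrow> z \<notin> \<int>"
  by (auto elim!: Ints_cases)

lemma quad_sum:
  fixes c :: real
  assumes c: "c > 0"
  shows "(\<lambda>k. 1 / ((real (Suc k))\<^sup>2 + c\<^sup>2)) sums ((pi * c * ctn (pi * c) - 1) / (2 * c\<^sup>2))"
proof -
  define z where "z = \<i> * complex_of_real c"
  have z: "z \<notin> \<int>" using c by (intro notint_Im) (simp add: z_def)
  have z2: "z\<^sup>2 = - of_real (c\<^sup>2)" by (simp add: z_def power_mult_distrib)
  have ct: "cot (of_real pi * z) = - \<i> * of_real (ctn (pi * c))"
    using cot_sin0[of 0 "pi * c"] by (simp add: z_def ctn_def algebra_simps)
  have T: "1 / ((of_nat (Suc k))\<^sup>2 - z\<^sup>2) = of_real (1 / ((real (Suc k))\<^sup>2 + c\<^sup>2))" for k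
    unfolding z2 by simp
  have V: "Gf z = of_real ((pi * c * ctn (pi * c) - 1) / (2 * c\<^sup>2))"
  proof -
    have "of_real pi * z * cot (of_real pi * z) = of_real (pi * c * ctn (pi * c))"
      unfolding ct by (simp add: z_def algebra_simps)
    hence "Gf z = (1 - of_real (pi * c * ctn (pi * c))) / (- 2 * of_real (c\<^sup>2))"
      unfolding Gf_def z2 by simp
    also have "\<dots> = of_real ((1 - pi * c * ctn (pi * c)) / (- 2 * c\<^sup>2))" by simp
    also have "(1 - pi * c * ctn (pi * c)) / (- 2 * c\<^sup>2) = (pi * c * ctn (pi * c) - 1) / (2 * c\<^sup>2)"
      using c by (simp add: field_simps)
    finally show ?thesis .
  qed
  from G_sums[OF z] show ?thesis unfolding T V sums_of_real_iff .
qed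

lemma sin_half_even: "even n \<Longrightarrow> sin (pi * real n / 2) = 0"
  by (elim evenE) (simp add: sin_npi mult.commute)

lemma cos_half_odd: "odd n \<Longrightarrow> cos (pi * real n / 2) = 0"
proof (elim oddE)
  fix j assume "n = 2 * j + 1"
  hence e: "pi * real n / 2 = real j * pi + pi / 2" by (simp add: field_simps)
  show "cos (pi * real n / 2) = 0" unfolding e by (simp add: cos_add sin_npi)
qed

definition Xf :: "nat \<Rightarrow> real" where
  "Xf n = (if even n then ctn (pi * real n / 2) else tanh (pi * real n / 2))"

lemma quartA:
  fixes n :: nat
  assumes n: "n > 0"
  shows "(\<lambda>k. 1 / ((real n)^4 + 4 * (real (Suc k))^4)) sums ((pi * real n * Xf n - 2) / (4 * (real n)^4))"
proof -
  define c where "c = real n / 2"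
  have c: "c > 0" using n by (simp add: c_def)
  have arg1: "of_real pi * (of_real c * (1 + \<i>)) = of_real (pi * real n / 2) + \<i> * of_real (pi * real n / 2)"
    by (simp add: c_def algebra_simps)
  have arg2: "of_real pi * (\<i> * (of_real c * (1 + \<i>))) = of_real (- (pi * real n / 2)) + \<i> * of_real (pi * real n / 2)"
    by (simp add: c_def complex_eq_iff)
  have h1: "cot (of_real pi * (of_real c * (1 + \<i>))) = - \<i> * of_real (Xf n)"
    unfolding arg1 Xf_def
    using cot_sin0[of "pi * real n / 2" "pi * real n / 2"] cot_cos0[of "pi * real n / 2" "pi * real n / 2"] sin_half_even[of n] cos_half_odd[of n]
    by (auto simp: ctn_def tanh_def)
  have h2: "cot (of_real pi * (\<i> * (of_real c * (1 + \<i>)))) = - \<i> * of_real (Xf n)"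
    unfolding arg2 Xf_def
    using cot_sin0[of "- (pi * real n / 2)" "pi * real n / 2"] cot_cos0[of "- (pi * real n / 2)" "pi * real n / 2"] sin_half_even[of n] cos_half_odd[of n]
    by (auto simp: ctn_def tanh_def)
  have S: "(\<lambda>k. 1 / ((real (Suc k))^4 + 4 * c^4) / 4) sums ((pi * c * Xf n - 1) / (8 * c^4) / 4)"
    by (intro sums_divide quartic_sums_real(1)[OF c h1 h2])
  have e1: "1 / ((real (Suc k))^4 + 4 * c^4) / 4 = 1 / ((real n)^4 + 4 * (real (Suc k))^4)" for k
  proof -
    have "(real (Suc k))^4 + 4 * c^4 = ((real n)^4 + 4 * (real (Suc k))^4) / 4"
      by (simp add: c_def field_simps)
    thus ?thesis by simp
  qed
  have e2: "(pi * c * Xf n - 1) / (8 * c^4) / 4 = (pi * real n * Xf n - 2) / (4 * (real n)^4)"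
    using n by (simp add: c_def field_simps)
  show ?thesis using S unfolding e1 e2 .
qed

lemma quartB:
  fixes m :: nat
  assumes m: "m > 0"
  shows "(\<lambda>k. (real (Suc k))\<^sup>2 / ((real (Suc k))^4 + 4 * (real m)^4)) sums (pi * ctn (pi * real m) / (4 * real m))"
proof -
  have c: "real m > 0" using m by simp
  have arg1: "of_real pi * (of_real (real m) * (1 + \<i>)) = of_real (pi * real m) + \<i> * of_real (pi * real m)"
    by (simp add: algebra_simps)
  have arg2: "of_real pi * (\<i> * (of_real (real m) * (1 + \<i>))) = of_real (- (pi * real m)) + \<i> * of_real (pi * real m)"
    by (simp add: algebra_simps)
  have h1: "cot (of_real pi * (of_real (real m) * (1 + \<i>))) = - \<i> * of_real (ctn (pi * real m))"
    unfolding arg1 ctn_def by (rule cot_sin0) (simp add: sin_npi mult.commute)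
  have h2: "cot (of_real pi * (\<i> * (of_real (real m) * (1 + \<i>)))) = - \<i> * of_real (ctn (pi * real m))"
    unfolding arg2 ctn_def by (rule cot_sin0) (simp add: sin_npi mult.commute)
  show ?thesis by (rule quartic_sums_real(2)[OF c h1 h2])
qed



lemma psum: "p \<ge> 2 \<Longrightarrow> summable (\<lambda>k. 1 / (real (Suc k))^p)"
  using inverse_power_summable[of p, where 'a=real] summable_Suc_iff[of "\<lambda>n. inverse (real n ^ p)"]
  by (simp add: inverse_eq_divide)

lemma z2_sums: "(\<lambda>k. 1 / (real (Suc k))\<^sup>2) sums (pi\<^sup>2 / 6)"
  using inverse_squares_sums by (simp add: add.commute)

lemma lim_aux:
  fixes F :: "real \<Rightarrow> real" and u w :: "nat \<Rightarrow> real" and v :: "nat \<Rightarrow> real \<Rightarrow> real"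
  assumes F: "\<And>c. c > 0 \<Longrightarrow> (\<lambda>k. u k - c\<^sup>2 * v k c) sums F c"
    and v: "\<And>k c. c > 0 \<Longrightarrow> 0 \<le> v k c \<and> v k c \<le> w k"
    and su: "summable u" and sw: "summable w"
  shows "(F \<longlongrightarrow> suminf u) (at_right 0)"
proof -
  have sv: "summable (\<lambda>k. v k c)" if "c > 0" for c
    by (rule summable_comparison_test[OF _ sw]) (use v[OF that] in auto)
  have Fe: "F c = suminf u - c\<^sup>2 * (\<Sum>k. v k c)" if "c > 0" for c
  proof -
    have "(\<lambda>k. u k - c\<^sup>2 * v k c) sums (suminf u - c\<^sup>2 * (\<Sum>k. v k c))"
      by (intro sums_diff sums_mult summable_sums su sv that)
    with F[OF that] show ?thesis using sums_unique2 by blast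
  qed
  have Vb: "0 \<le> (\<Sum>k. v k c) \<and> (\<Sum>k. v k c) \<le> suminf w" if "c > 0" for c
    using v[OF that] sv[OF that] sw by (auto intro!: suminf_nonneg suminf_le)
  have lim0: "((\<lambda>c. c\<^sup>2 * (\<Sum>k. v k c)) \<longlongrightarrow> 0) (at_right 0)"
  proof (rule tendsto_sandwich[of "\<lambda>_. 0" _ _ "\<lambda>c. c\<^sup>2 * suminf w"])
    show "\<forall>\<^sub>F c in at_right 0. 0 \<le> c\<^sup>2 * (\<Sum>k. v k c)"
      using eventually_at_right_less[of 0] by eventually_elim (use Vb in auto)
    show "\<forall>\<^sub>F c in at_right 0. c\<^sup>2 * (\<Sum>k. v k c) \<le> c\<^sup>2 * suminf w"
      using eventually_at_right_less[of 0] by eventually_elim (use Vb in \<open>auto intro!: mult_left_mono\<close>)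
    show "((\<lambda>_. 0::real) \<longlongrightarrow> 0) (at_right 0)" by simp
    have "((\<lambda>c::real. c\<^sup>2 * suminf w) \<longlongrightarrow> 0\<^sup>2 * suminf w) (at_right 0)"
      by (intro tendsto_intros)
    thus "((\<lambda>c::real. c\<^sup>2 * suminf w) \<longlongrightarrow> 0) (at_right 0)" by simp
  qed
  have "((\<lambda>c. suminf u - c\<^sup>2 * (\<Sum>k. v k c)) \<longlongrightarrow> suminf u - 0) (at_right 0)"
    by (intro tendsto_intros lim0)
  moreover have "\<forall>\<^sub>F c in at_right 0. suminf u - c\<^sup>2 * (\<Sum>k. v k c) = F c"
    using eventually_at_right_less[of 0] by eventually_elim (use Fe in auto)
  ultimately show ?thesis by (simp add: tendsto_cong)
qed

definition Rf :: "real \<Rightarrow> real" where "Rf c = (pi * c * ctn (pi * c) - 1) / (2 * c\<^sup>2)"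
definition ff :: "real \<Rightarrow> real" where "ff c = (pi\<^sup>2 / 6 - Rf c) / c\<^sup>2"
definition phi1 :: "real \<Rightarrow> real" where "phi1 x = (1/6 - (x * ctn x - 1) / (2 * x\<^sup>2)) / x\<^sup>2"
definition phi2 :: "real \<Rightarrow> real" where "phi2 x = (1/90 - phi1 x) / x\<^sup>2"

lemma phi1_lim: "(phi1 \<longlongrightarrow> 1/90) (at_right 0)"
  unfolding phi1_def ctn_def by real_asymp

lemma phi2_lim: "(phi2 \<longlongrightarrow> 1/945) (at_right 0)"
  unfolding phi2_def phi1_def ctn_def by real_asymp

lemma alg4:
  fixes N c :: real assumes "N > 0" "c > 0"
  shows "(1 / N\<^sup>2 - 1 / (N\<^sup>2 + c\<^sup>2)) / c\<^sup>2 = 1 / (N\<^sup>2 * (N\<^sup>2 + c\<^sup>2))"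
    and "1 / N^4 - c\<^sup>2 * (1 / (N^4 * (N\<^sup>2 + c\<^sup>2))) = 1 / (N\<^sup>2 * (N\<^sup>2 + c\<^sup>2))"
    and "(1 / N^4 - 1 / (N\<^sup>2 * (N\<^sup>2 + c\<^sup>2))) / c\<^sup>2 = 1 / (N^4 * (N\<^sup>2 + c\<^sup>2))"
    and "1 / N^6 - c\<^sup>2 * (1 / (N^6 * (N\<^sup>2 + c\<^sup>2))) = 1 / (N^4 * (N\<^sup>2 + c\<^sup>2))"
proof -
  have D: "N\<^sup>2 + c\<^sup>2 > 0" using assms by (intro add_pos_pos) auto
  have N: "N \<noteq> 0" "c \<noteq> 0" using assms by auto
  have "1 / N\<^sup>2 - 1 / (N\<^sup>2 + c\<^sup>2) = c\<^sup>2 * (1 / (N\<^sup>2 * (N\<^sup>2 + c\<^sup>2)))"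
    using D N by (simp add: field_simps)
  thus "(1 / N\<^sup>2 - 1 / (N\<^sup>2 + c\<^sup>2)) / c\<^sup>2 = 1 / (N\<^sup>2 * (N\<^sup>2 + c\<^sup>2))"
    using N by simp
  have gen: "1 / X - c\<^sup>2 * (1 / (X * (N\<^sup>2 + c\<^sup>2))) = N\<^sup>2 / (X * (N\<^sup>2 + c\<^sup>2))" if "X \<noteq> 0" for X
  proof -
    have e: "1 / X = (N\<^sup>2 + c\<^sup>2) / (X * (N\<^sup>2 + c\<^sup>2))" using D that N by simp
    have b: "c\<^sup>2 * (1 / (X * (N\<^sup>2 + c\<^sup>2))) = c\<^sup>2 / (X * (N\<^sup>2 + c\<^sup>2))" by simp
    have cc: "(N\<^sup>2 + c\<^sup>2) / (X * (N\<^sup>2 + c\<^sup>2)) - c\<^sup>2 / (X * (N\<^sup>2 + c\<^sup>2)) = N\<^sup>2 / (X * (N\<^sup>2 + c\<^sup>2))"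
      unfolding diff_divide_distrib[symmetric] by (simp only: add_diff_cancel_right')
    show ?thesis by (simp only: e b cc)
  qed
  have e4: "N^4 * (N\<^sup>2 + c\<^sup>2) = N\<^sup>2 * (N\<^sup>2 * (N\<^sup>2 + c\<^sup>2))" by (simp add: power4_eq_xxxx power2_eq_square)
  have "N\<^sup>2 / (N^4 * (N\<^sup>2 + c\<^sup>2)) = 1 / (N\<^sup>2 * (N\<^sup>2 + c\<^sup>2))" unfolding e4 by (rule nonzero_divide_mult_cancel_left) (use N in simp)
  thus h2: "1 / N^4 - c\<^sup>2 * (1 / (N^4 * (N\<^sup>2 + c\<^sup>2))) = 1 / (N\<^sup>2 * (N\<^sup>2 + c\<^sup>2))"
    using gen[of "N^4"] N by simp
  have "1 / N^4 - 1 / (N\<^sup>2 * (N\<^sup>2 + c\<^sup>2)) = c\<^sup>2 * (1 / (N^4 * (N\<^sup>2 + c\<^sup>2)))"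
    using h2 by linarith
  thus "(1 / N^4 - 1 / (N\<^sup>2 * (N\<^sup>2 + c\<^sup>2))) / c\<^sup>2 = 1 / (N^4 * (N\<^sup>2 + c\<^sup>2))"
    using N by simp
  have e6: "N^6 * (N\<^sup>2 + c\<^sup>2) = N\<^sup>2 * (N^4 * (N\<^sup>2 + c\<^sup>2))" by (simp add: eval_nat_numeral)
  have "N\<^sup>2 / (N^6 * (N\<^sup>2 + c\<^sup>2)) = 1 / (N^4 * (N\<^sup>2 + c\<^sup>2))" unfolding e6 by (rule nonzero_divide_mult_cancel_left) (use N in simp)
  thus "1 / N^6 - c\<^sup>2 * (1 / (N^6 * (N\<^sup>2 + c\<^sup>2))) = 1 / (N^4 * (N\<^sup>2 + c\<^sup>2))"
    using gen[of "N^6"] N by simp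
qed

lemma ff_sums: "c > 0 \<Longrightarrow> (\<lambda>k. 1 / ((real (Suc k))\<^sup>2 * ((real (Suc k))\<^sup>2 + c\<^sup>2))) sums ff c"
proof -
  assume c: "c > 0"
  have "(\<lambda>k. (1 / (real (Suc k))\<^sup>2 - 1 / ((real (Suc k))\<^sup>2 + c\<^sup>2)) / c\<^sup>2) sums ((pi\<^sup>2 / 6 - Rf c) / c\<^sup>2)"
    unfolding Rf_def by (intro sums_divide sums_diff z2_sums quad_sum c)
  moreover have "(\<lambda>k. (1 / (real (Suc k))\<^sup>2 - 1 / ((real (Suc k))\<^sup>2 + c\<^sup>2)) / c\<^sup>2) =
      (\<lambda>k. 1 / ((real (Suc k))\<^sup>2 * ((real (Suc k))\<^sup>2 + c\<^sup>2)))"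
    using c by (intro ext alg4(1)) auto
  ultimately show ?thesis unfolding ff_def by (simp only:)
qed

lemma ff_scale: "x > 0 \<Longrightarrow> ff (x / pi) = pi^4 * phi1 x"
proof -
  assume x: "x > 0"
  define A where "A = (x * ctn x - 1) / (2 * x\<^sup>2)"
  have p: "pi * (x / pi) = x" by simp
  have R: "Rf (x / pi) = pi\<^sup>2 * A"
    unfolding Rf_def p A_def using x by (simp add: power_divide)
  have "ff (x / pi) = (pi\<^sup>2 / 6 - pi\<^sup>2 * A) * pi\<^sup>2 / x\<^sup>2"
    unfolding ff_def R by (simp add: power_divide)
  also have "\<dots> = pi^4 * ((1/6 - A) / x\<^sup>2)"
    by (simp add: algebra_simps power2_eq_square power4_eq_xxxx)
  finally show ?thesis unfolding phi1_def A_def .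
qed

lemma scale_filterlim: "filterlim (\<lambda>x::real. x / pi) (at_right 0) (at_right 0)"
  by real_asymp

lemma z4_sums: "(\<lambda>k. 1 / (real (Suc k))^4) sums (pi^4 / 90)"
proof -
  have L: "(ff \<longlongrightarrow> (\<Sum>k. 1 / (real (Suc k))^4)) (at_right 0)"
  proof (rule lim_aux[where w = "\<lambda>k. 1 / (real (Suc k))^6" and v = "\<lambda>k c. 1 / ((real (Suc k))^4 * ((real (Suc k))\<^sup>2 + c\<^sup>2))"])
    fix c :: real assume c: "c > 0"
    show "(\<lambda>k. 1 / (real (Suc k))^4 - c\<^sup>2 * (1 / ((real (Suc k))^4 * ((real (Suc k))\<^sup>2 + c\<^sup>2)))) sums ff c"
      using ff_sums[OF c] alg4(2)[of _ c] c by simp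
  next
    fix k :: nat and c :: real assume c: "c > 0"
    have "(real (Suc k))^4 * (real (Suc k))\<^sup>2 \<le> (real (Suc k))^4 * ((real (Suc k))\<^sup>2 + c\<^sup>2)"
      by (intro mult_left_mono) auto
    hence "1 / ((real (Suc k))^4 * ((real (Suc k))\<^sup>2 + c\<^sup>2)) \<le> 1 / ((real (Suc k))^4 * (real (Suc k))\<^sup>2)"
      by (intro divide_left_mono) (auto intro!: mult_pos_pos add_pos_nonneg)
    also have "(real (Suc k))^4 * (real (Suc k))\<^sup>2 = (real (Suc k))^6" by (simp add: eval_nat_numeral)
    finally show "0 \<le> 1 / ((real (Suc k))^4 * ((real (Suc k))\<^sup>2 + c\<^sup>2)) \<and>
        1 / ((real (Suc k))^4 * ((real (Suc k))\<^sup>2 + c\<^sup>2)) \<le> 1 / (real (Suc k))^6"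
      by (simp add: add_pos_nonneg)
  qed (rule psum, simp)+
  have L1: "((\<lambda>x. ff (x / pi)) \<longlongrightarrow> (\<Sum>k. 1 / (real (Suc k))^4)) (at_right 0)"
    by (rule filterlim_compose[OF L scale_filterlim])
  have L2: "((\<lambda>x. ff (x / pi)) \<longlongrightarrow> pi^4 * (1/90)) (at_right 0)"
  proof -
    have "((\<lambda>x. pi^4 * phi1 x) \<longlongrightarrow> pi^4 * (1/90)) (at_right 0)"
      by (intro tendsto_intros phi1_lim)
    moreover have "\<forall>\<^sub>F x in at_right 0. pi^4 * phi1 x = ff (x / pi)"
      using eventually_at_right_less[of 0] by eventually_elim (simp add: ff_scale)
    ultimately show ?thesis by (simp add: tendsto_cong)
  qed
  have eq: "(\<Sum>k. 1 / (real (Suc k))^4) = pi^4 / 90"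
    using tendsto_unique[OF _ L1 L2] by simp
  have "summable (\<lambda>k. 1 / (real (Suc k))^4)" by (rule psum) simp
  from summable_sums[OF this] show ?thesis unfolding eq .
qed

definition gg :: "real \<Rightarrow> real" where "gg c = (pi^4 / 90 - ff c) / c\<^sup>2"

lemma gg_sums: "c > 0 \<Longrightarrow> (\<lambda>k. 1 / ((real (Suc k))^4 * ((real (Suc k))\<^sup>2 + c\<^sup>2))) sums gg c"
proof -
  assume c: "c > 0"
  have "(\<lambda>k. (1 / (real (Suc k))^4 - 1 / ((real (Suc k))\<^sup>2 * ((real (Suc k))\<^sup>2 + c\<^sup>2))) / c\<^sup>2) sums ((pi^4 / 90 - ff c) / c\<^sup>2)"
    by (intro sums_divide sums_diff z4_sums ff_sums c)
  moreover have "(\<lambda>k. (1 / (real (Suc k))^4 - 1 / ((real (Suc k))\<^sup>2 * ((real (Suc k))\<^sup>2 + c\<^sup>2))) / c\<^sup>2) =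
      (\<lambda>k. 1 / ((real (Suc k))^4 * ((real (Suc k))\<^sup>2 + c\<^sup>2)))"
    using c by (intro ext alg4(3)) auto
  ultimately show ?thesis unfolding gg_def by (simp only:)
qed

lemma gg_scale: "x > 0 \<Longrightarrow> gg (x / pi) = pi^6 * phi2 x"
proof -
  assume x: "x > 0"
  have "gg (x / pi) = (pi^4 / 90 - pi^4 * phi1 x) * pi\<^sup>2 / x\<^sup>2"
    unfolding gg_def ff_scale[OF x] by (simp add: power_divide)
  also have "\<dots> = pi^6 * ((1/90 - phi1 x) / x\<^sup>2)"
    by (simp add: algebra_simps power2_eq_square eval_nat_numeral)
  finally show ?thesis unfolding phi2_def .
qed

lemma z6_sums: "(\<lambda>k. 1 / (real (Suc k))^6) sums (pi^6 / 945)"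
proof -
  have L: "(gg \<longlongrightarrow> (\<Sum>k. 1 / (real (Suc k))^6)) (at_right 0)"
  proof (rule lim_aux[where w = "\<lambda>k. 1 / (real (Suc k))^8" and v = "\<lambda>k c. 1 / ((real (Suc k))^6 * ((real (Suc k))\<^sup>2 + c\<^sup>2))"])
    fix c :: real assume c: "c > 0"
    show "(\<lambda>k. 1 / (real (Suc k))^6 - c\<^sup>2 * (1 / ((real (Suc k))^6 * ((real (Suc k))\<^sup>2 + c\<^sup>2)))) sums gg c"
      using gg_sums[OF c] alg4(4)[of _ c] c by simp
  next
    fix k :: nat and c :: real assume c: "c > 0"
    have "(real (Suc k))^6 * (real (Suc k))\<^sup>2 \<le> (real (Suc k))^6 * ((real (Suc k))\<^sup>2 + c\<^sup>2)"
      by (intro mult_left_mono) auto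
    hence "1 / ((real (Suc k))^6 * ((real (Suc k))\<^sup>2 + c\<^sup>2)) \<le> 1 / ((real (Suc k))^6 * (real (Suc k))\<^sup>2)"
      by (intro divide_left_mono) (auto intro!: mult_pos_pos add_pos_nonneg)
    also have "(real (Suc k))^6 * (real (Suc k))\<^sup>2 = (real (Suc k))^8" by (simp add: eval_nat_numeral)
    finally show "0 \<le> 1 / ((real (Suc k))^6 * ((real (Suc k))\<^sup>2 + c\<^sup>2)) \<and>
        1 / ((real (Suc k))^6 * ((real (Suc k))\<^sup>2 + c\<^sup>2)) \<le> 1 / (real (Suc k))^8"
      by (simp add: add_pos_nonneg)
  qed (rule psum, simp)+
  have L1: "((\<lambda>x. gg (x / pi)) \<longlongrightarrow> (\<Sum>k. 1 / (real (Suc k))^6)) (at_right 0)"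
    by (rule filterlim_compose[OF L scale_filterlim])
  have L2: "((\<lambda>x. gg (x / pi)) \<longlongrightarrow> pi^6 * (1/945)) (at_right 0)"
  proof -
    have "((\<lambda>x. pi^6 * phi2 x) \<longlongrightarrow> pi^6 * (1/945)) (at_right 0)"
      by (intro tendsto_intros phi2_lim)
    moreover have "\<forall>\<^sub>F x in at_right 0. pi^6 * phi2 x = gg (x / pi)"
      using eventually_at_right_less[of 0] by eventually_elim (simp add: gg_scale)
    ultimately show ?thesis by (simp add: tendsto_cong)
  qed
  have eq: "(\<Sum>k. 1 / (real (Suc k))^6) = pi^6 / 945"
    using tendsto_unique[OF _ L1 L2] by simp
  have "summable (\<lambda>k. 1 / (real (Suc k))^6)" by (rule psum) simp
  from summable_sums[OF this] show ?thesis unfolding eq .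
qed



lemma alg1: "(N::real) > 0 \<Longrightarrow> (pi * N * x - 2) / (4 * N^4) * (1 / N\<^sup>2) = pi * x / (4 * N^5) - 1 / (2 * N^6)"
  by (simp add: field_simps power2_eq_square eval_nat_numeral)

lemma alg2:
  fixes N M :: real assumes "N > 0" "M > 0"
  shows "(1 / N\<^sup>2 - N\<^sup>2 / (N^4 + 4 * M^4)) / (4 * M^4) = 1 / (N\<^sup>2 * (N^4 + 4 * M^4))"
proof -
  have p: "N^4 + 4 * M^4 > 0" using assms by (intro add_pos_pos) auto
  have "1 / N\<^sup>2 - N\<^sup>2 / (N^4 + 4 * M^4) = ((N^4 + 4 * M^4) - N\<^sup>2 * N\<^sup>2) / (N\<^sup>2 * (N^4 + 4 * M^4))"
    using assms p by (simp add: diff_frac_eq)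
  also have "(N^4 + 4 * M^4) - N\<^sup>2 * N\<^sup>2 = 4 * M^4" by (simp add: power2_eq_square power4_eq_xxxx)
  finally show ?thesis using assms p by simp
qed

lemma alg3: "(M::real) > 0 \<Longrightarrow> (a - pi * t / (4 * M)) / (4 * M^4) = a / (4 * M^4) - pi * t / (16 * M^5)"
proof -
  assume M: "M > 0"
  have "(a - pi * t / (4 * M)) / (4 * M^4) = a / (4 * M^4) - (pi * t / (4 * M)) / (4 * M^4)"
    by (simp add: diff_divide_distrib)
  also have "(pi * t / (4 * M)) / (4 * M^4) = pi * t / (16 * M^5)"
  proof -
    have "M^5 = M * M^4" by (simp add: numeral_eq_Suc)
    thus ?thesis by (simp add: divide_divide_eq_left mult_ac)
  qed
  finally show ?thesis .
qed

lemma relII: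
  "\<exists>S. (\<lambda>k. pi * Xf (Suc k) / (4 * (real (Suc k))^5) - 1 / (2 * (real (Suc k))^6)) sums S \<and> (\<lambda>l. (pi\<^sup>2 / 6) / (4 * (real (Suc l))^4) - pi * ctn (pi * real (Suc l)) / (16 * (real (Suc l))^5)) sums S"
proof -
  define f where "f k l = 1 / ((real (Suc k))\<^sup>2 * ((real (Suc k))^4 + 4 * (real (Suc l))^4))" for k l
  define r where "r k = pi * Xf (Suc k) / (4 * (real (Suc k))^5) - 1 / (2 * (real (Suc k))^6)" for k
  define c where "c l = (pi\<^sup>2 / 6) / (4 * (real (Suc l))^4) - pi * ctn (pi * real (Suc l)) / (16 * (real (Suc l))^5)" for l
  have nn: "f k l \<ge> 0" for k l by (simp add: f_def)
  have rows: "f k sums r k" for k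
  proof -
    have "(\<lambda>l. 1 / ((real (Suc k))^4 + 4 * (real (Suc l))^4) * (1 / (real (Suc k))\<^sup>2)) sums
       ((pi * real (Suc k) * Xf (Suc k) - 2) / (4 * (real (Suc k))^4) * (1 / (real (Suc k))\<^sup>2))"
      by (intro sums_mult2 quartA) simp
    moreover have "(\<lambda>l. 1 / ((real (Suc k))^4 + 4 * (real (Suc l))^4) * (1 / (real (Suc k))\<^sup>2)) = f k"
      by (auto simp: f_def)
    moreover have "(pi * real (Suc k) * Xf (Suc k) - 2) / (4 * (real (Suc k))^4) * (1 / (real (Suc k))\<^sup>2) = r k"
      unfolding r_def by (rule alg1) simp
    ultimately show ?thesis by simp
  qed
  have s4: "summable (\<lambda>l. 1 / (real (Suc l))^4)" by (rule psum) simp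
  have rle: "r k \<le> (\<Sum>l. 1 / (real (Suc l))^4) / 4 * (1 / (real (Suc k))\<^sup>2)" for k
  proof -
    have "r k = (\<Sum>l. f k l)" using rows[of k] by (simp add: sums_iff)
    also have "\<dots> \<le> (\<Sum>l. 1 / (real (Suc l))^4 / 4 * (1 / (real (Suc k))\<^sup>2))"
    proof (rule suminf_le)
      fix l
      have "(real (Suc k))\<^sup>2 * (4 * (real (Suc l))^4) \<le> (real (Suc k))\<^sup>2 * ((real (Suc k))^4 + 4 * (real (Suc l))^4)"
        by (intro mult_left_mono) auto
      moreover have "0 < (real (Suc k))\<^sup>2 * (4 * (real (Suc l))^4)" by simp
      ultimately have "1 / ((real (Suc k))\<^sup>2 * ((real (Suc k))^4 + 4 * (real (Suc l))^4)) \<le> 1 / ((real (Suc k))\<^sup>2 * (4 * (real (Suc l))^4))"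
        by (intro divide_left_mono) (auto intro!: mult_pos_pos add_pos_pos)
      thus "f k l \<le> 1 / (real (Suc l))^4 / 4 * (1 / (real (Suc k))\<^sup>2)"
        by (simp add: f_def field_simps)
    next
      show "summable (f k)" using rows[of k] by (simp add: sums_iff)
    next
      show "summable (\<lambda>l. 1 / (real (Suc l))^4 / 4 * (1 / (real (Suc k))\<^sup>2))"
        by (rule summable_mult2[OF summable_divide[OF s4]])
    qed
    also have "\<dots> = (\<Sum>l. 1 / (real (Suc l))^4) / 4 * (1 / (real (Suc k))\<^sup>2)"
      using suminf_mult2[OF summable_divide[OF s4], of 4 "1 / (real (Suc k))\<^sup>2"] suminf_divide[OF s4, of 4]
      by metis
    finally show ?thesis .
  qed
  have rnn: "r k \<ge> 0" for k using rows[of k] nn by (metis sums_iff suminf_nonneg)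
  have sr: "summable r"
  proof (rule summable_comparison_test[of _ "\<lambda>k. (\<Sum>l. 1 / (real (Suc l))^4) / 4 * (1 / (real (Suc k))\<^sup>2)"])
    show "\<exists>N. \<forall>n\<ge>N. norm (r n) \<le> (\<Sum>l. 1 / (real (Suc l))^4) / 4 * (1 / (real (Suc n))\<^sup>2)"
      using rle rnn by auto
    show "summable (\<lambda>k. (\<Sum>l. 1 / (real (Suc l))^4) / 4 * (1 / (real (Suc k))\<^sup>2))"
      by (intro summable_mult psum) simp
  qed
  have cols: "(\<lambda>k. f k l) sums c l" for l
  proof -
    define M where "M = real (Suc l)"
    have M: "M > 0" by (simp add: M_def)
    have "(\<lambda>k. (1 / (real (Suc k))\<^sup>2 - (real (Suc k))\<^sup>2 / ((real (Suc k))^4 + 4 * (real (Suc l))^4)) / (4 * M^4)) sums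
       ((pi\<^sup>2 / 6 - pi * ctn (pi * real (Suc l)) / (4 * real (Suc l))) / (4 * M^4))"
      by (intro sums_divide sums_diff z2_sums quartB) simp
    moreover have "(\<lambda>k. (1 / (real (Suc k))\<^sup>2 - (real (Suc k))\<^sup>2 / ((real (Suc k))^4 + 4 * (real (Suc l))^4)) / (4 * M^4)) = (\<lambda>k. f k l)"
      unfolding f_def M_def[symmetric] using M by (intro ext alg2) auto
    moreover have "(pi\<^sup>2 / 6 - pi * ctn (pi * real (Suc l)) / (4 * real (Suc l))) / (4 * M^4) = c l"
      unfolding c_def M_def by (rule alg3) simp
    ultimately show ?thesis by (simp only:)
  qed
  have "c sums (suminf r)" by (rule double_swap[OF nn rows sr cols])
  hence "r sums suminf r \<and> c sums suminf r" using summable_sums[OF sr] by simp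
  thus ?thesis unfolding r_def c_def by blast
qed



lemma alg5:
  fixes N M :: real assumes "N > 0" "M > 0"
  shows "1 / (N^4 * (N\<^sup>2 + 4 * M\<^sup>2)) = 1 / N^4 / (4 * M\<^sup>2) - 1 / N\<^sup>2 / (16 * M^4) + 1 / (N\<^sup>2 + (2 * M)\<^sup>2) / (16 * M^4)"
proof -
  have D: "N\<^sup>2 + 4 * M\<^sup>2 > 0" using assms by (intro add_pos_pos) auto
  have D': "N\<^sup>2 + (2 * M)\<^sup>2 = N\<^sup>2 + 4 * M\<^sup>2" by (simp add: power_mult_distrib)
  have n: "N \<noteq> 0" "M \<noteq> 0" "N\<^sup>2 + 4 * M\<^sup>2 \<noteq> 0" using assms D by auto
  show ?thesis unfolding D' using n
    by (simp add: divide_simps) (simp add: algebra_simps eval_nat_numeral)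
qed

lemma alg6:
  fixes N :: real assumes "N > 0"
  shows "(pi * (N / 2) * ctn (pi * (N / 2)) - 1) / (2 * (N / 2)\<^sup>2) / 4 * (1 / N^4) =
     pi * ctn (pi * N / 2) / (4 * N^5) - 1 / (2 * N^6)"
  using assms by (simp add: field_simps power2_eq_square eval_nat_numeral)

lemma relI:
  "\<exists>S. (\<lambda>k. pi * ctn (pi * real (Suc k) / 2) / (4 * (real (Suc k))^5) - 1 / (2 * (real (Suc k))^6)) sums S \<and> (\<lambda>l. (pi^4 / 90) / (4 * (real (Suc l))\<^sup>2) - (pi\<^sup>2 / 6) / (16 * (real (Suc l))^4)
        + (pi * (2 * real (Suc l)) * ctn (pi * (2 * real (Suc l))) - 1) / (2 * (2 * real (Suc l))\<^sup>2) / (16 * (real (Suc l))^4)) sums S"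
proof -
  define f where "f k l = 1 / ((real (Suc k))^4 * ((real (Suc k))\<^sup>2 + 4 * (real (Suc l))\<^sup>2))" for k l
  define r where "r k = pi * ctn (pi * real (Suc k) / 2) / (4 * (real (Suc k))^5) - 1 / (2 * (real (Suc k))^6)" for k
  define c where "c l = (pi^4 / 90) / (4 * (real (Suc l))\<^sup>2) - (pi\<^sup>2 / 6) / (16 * (real (Suc l))^4)
        + (pi * (2 * real (Suc l)) * ctn (pi * (2 * real (Suc l))) - 1) / (2 * (2 * real (Suc l))\<^sup>2) / (16 * (real (Suc l))^4)" for l
  have nn: "f k l \<ge> 0" for k l by (simp add: f_def)
  have rows: "f k sums r k" for k
  proof -
    define N where "N = real (Suc k)"
    have N: "N > 0" by (simp add: N_def)
    have "(\<lambda>l. 1 / ((real (Suc l))\<^sup>2 + (N / 2)\<^sup>2) / 4 * (1 / N^4)) sums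
       ((pi * (N / 2) * ctn (pi * (N / 2)) - 1) / (2 * (N / 2)\<^sup>2) / 4 * (1 / N^4))"
      by (intro sums_mult2 sums_divide quad_sum) (use N in simp)
    moreover have "(\<lambda>l. 1 / ((real (Suc l))\<^sup>2 + (N / 2)\<^sup>2) / 4 * (1 / N^4)) = f k"
    proof
      fix l
      have "(real (Suc l))\<^sup>2 + (N / 2)\<^sup>2 = (N\<^sup>2 + 4 * (real (Suc l))\<^sup>2) / 4"
        by (simp add: power_divide field_simps)
      thus "1 / ((real (Suc l))\<^sup>2 + (N / 2)\<^sup>2) / 4 * (1 / N^4) = f k l"
        unfolding f_def N_def[symmetric] by simp
    qed
    moreover have "(pi * (N / 2) * ctn (pi * (N / 2)) - 1) / (2 * (N / 2)\<^sup>2) / 4 * (1 / N^4) = r k"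
      unfolding r_def N_def[symmetric] by (rule alg6[OF N])
    ultimately show ?thesis by (simp only:)
  qed
  have s2: "summable (\<lambda>l. 1 / (real (Suc l))\<^sup>2)" by (rule psum) simp
  have rle: "r k \<le> (\<Sum>l. 1 / (real (Suc l))\<^sup>2) / 4 * (1 / (real (Suc k))^4)" for k
  proof -
    have "r k = (\<Sum>l. f k l)" using rows[of k] by (simp add: sums_iff)
    also have "\<dots> \<le> (\<Sum>l. 1 / (real (Suc l))\<^sup>2 / 4 * (1 / (real (Suc k))^4))"
    proof (rule suminf_le)
      fix l
      have "(real (Suc k))^4 * (4 * (real (Suc l))\<^sup>2) \<le> (real (Suc k))^4 * ((real (Suc k))\<^sup>2 + 4 * (real (Suc l))\<^sup>2)"
        by (intro mult_left_mono) auto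
      moreover have "0 < (real (Suc k))^4 * (4 * (real (Suc l))\<^sup>2)" by simp
      ultimately have "1 / ((real (Suc k))^4 * ((real (Suc k))\<^sup>2 + 4 * (real (Suc l))\<^sup>2)) \<le> 1 / ((real (Suc k))^4 * (4 * (real (Suc l))\<^sup>2))"
        by (intro divide_left_mono) (auto intro!: mult_pos_pos add_pos_pos)
      thus "f k l \<le> 1 / (real (Suc l))\<^sup>2 / 4 * (1 / (real (Suc k))^4)"
        by (simp add: f_def field_simps)
    next
      show "summable (f k)" using rows[of k] by (simp add: sums_iff)
    next
      show "summable (\<lambda>l. 1 / (real (Suc l))\<^sup>2 / 4 * (1 / (real (Suc k))^4))"
        by (rule summable_mult2[OF summable_divide[OF s2]])
    qed
    also have "\<dots> = (\<Sum>l. 1 / (real (Suc l))\<^sup>2) / 4 * (1 / (real (Suc k))^4)"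
      using suminf_mult2[OF summable_divide[OF s2], of 4 "1 / (real (Suc k))^4"] suminf_divide[OF s2, of 4]
      by metis
    finally show ?thesis .
  qed
  have rnn: "r k \<ge> 0" for k using rows[of k] nn by (metis sums_iff suminf_nonneg)
  have sr: "summable r"
  proof (rule summable_comparison_test[of _ "\<lambda>k. (\<Sum>l. 1 / (real (Suc l))\<^sup>2) / 4 * (1 / (real (Suc k))^4)"])
    show "\<exists>N. \<forall>n\<ge>N. norm (r n) \<le> (\<Sum>l. 1 / (real (Suc l))\<^sup>2) / 4 * (1 / (real (Suc n))^4)"
      using rle rnn by auto
    show "summable (\<lambda>k. (\<Sum>l. 1 / (real (Suc l))\<^sup>2) / 4 * (1 / (real (Suc k))^4))"
      by (intro summable_mult psum) simp
  qed
  have cols: "(\<lambda>k. f k l) sums c l" for l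
  proof -
    define M where "M = real (Suc l)"
    have M: "M > 0" by (simp add: M_def)
    have "(\<lambda>k. 1 / (real (Suc k))^4 / (4 * M\<^sup>2) - 1 / (real (Suc k))\<^sup>2 / (16 * M^4) + 1 / ((real (Suc k))\<^sup>2 + (2 * M)\<^sup>2) / (16 * M^4)) sums
       ((pi^4 / 90) / (4 * M\<^sup>2) - (pi\<^sup>2 / 6) / (16 * M^4) + (pi * (2 * M) * ctn (pi * (2 * M)) - 1) / (2 * (2 * M)\<^sup>2) / (16 * M^4))"
      by (intro sums_add sums_diff sums_divide z4_sums z2_sums quad_sum) (use M in simp)
    moreover have "(\<lambda>k. 1 / (real (Suc k))^4 / (4 * M\<^sup>2) - 1 / (real (Suc k))\<^sup>2 / (16 * M^4) + 1 / ((real (Suc k))\<^sup>2 + (2 * M)\<^sup>2) / (16 * M^4)) = (\<lambda>k. f k l)"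
      unfolding f_def M_def[symmetric] using M by (intro ext alg5[symmetric]) auto
    ultimately show ?thesis unfolding c_def M_def by (simp only:)
  qed
  have "c sums (suminf r)" by (rule double_swap[OF nn rows sr cols])
  hence "r sums suminf r \<and> c sums suminf r" using summable_sums[OF sr] by simp
  thus ?thesis unfolding r_def c_def by blast
qed



lemma even_part:
  fixes h :: "nat \<Rightarrow> real"
  assumes "(\<lambda>j. h (2 * j)) sums e"
  shows "(\<lambda>n. if even n then h n else 0) sums e"
proof -
  have "(\<lambda>j. (\<lambda>n. if even n then h n else 0) (2 * j)) sums e" using assms by simp
  thus ?thesis
    by (subst (asm) sums_mono_reindex[of "\<lambda>j. 2 * j"]) (auto simp: strict_mono_def elim!: evenE)
qed

lemma odd_part:
  fixes h :: "nat \<Rightarrow> real"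
  assumes "(\<lambda>j. h (2 * j + 1)) sums e"
  shows "(\<lambda>n. if odd n then h n else 0) sums e"
proof -
  have "(\<lambda>j. (\<lambda>n. if odd n then h n else 0) (2 * j + 1)) sums e" using assms by simp
  thus ?thesis
    by (subst (asm) sums_mono_reindex[of "\<lambda>j. 2 * j + 1"]) (auto simp: strict_mono_def elim!: oddE)
qed

lemma parity_combine:
  fixes h :: "nat \<Rightarrow> real"
  assumes "(\<lambda>j. h (2 * j)) sums e" "(\<lambda>j. h (2 * j + 1)) sums od"
  shows "h sums (e + od)"
proof -
  have "(\<lambda>n. (if even n then h n else 0) + (if odd n then h n else 0)) sums (e + od)"
    by (intro sums_add even_part odd_part assms)
  moreover have "(\<lambda>n. (if even n then h n else 0) + (if odd n then h n else 0)) = h" by auto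
  ultimately show ?thesis by simp
qed

lemma parity_split:
  fixes h :: "nat \<Rightarrow> real"
  assumes "h sums s" "(\<lambda>j. h (2 * j)) sums e"
  shows "(\<lambda>j. h (2 * j + 1)) sums (s - e)"
proof -
  have "(\<lambda>n. h n - (if even n then h n else 0)) sums (s - e)"
    by (intro sums_diff even_part assms)
  moreover have "(\<lambda>n. h n - (if even n then h n else 0)) = (\<lambda>n. if odd n then h n else 0)" by auto
  ultimately have "(\<lambda>n. if odd n then h n else 0) sums (s - e)" by simp
  hence "(\<lambda>j. (\<lambda>n. if odd n then h n else 0) (2 * j + 1)) sums (s - e)"
    by (subst sums_mono_reindex[of "\<lambda>j. 2 * j + 1"]) (auto simp: strict_mono_def elim!: oddE)
  thus ?thesis by simp
qed

lemma tanh_ctn: "y \<noteq> 0 \<Longrightarrow> tanh y = 2 * ctn (2 * y) - ctn y"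
proof -
  assume y: "y \<noteq> 0"
  have s: "sinh y \<noteq> 0" using y by simp
  have c: "cosh y \<noteq> 0" by (metis cosh_real_pos less_irrefl)
  have "ctn (2 * y) = (cosh y ^ 2 + sinh y ^ 2) / (2 * sinh y * cosh y)"
    unfolding ctn_def by (simp add: cosh_double sinh_double)
  thus ?thesis using s c unfolding ctn_def tanh_def
    by (simp add: field_simps power2_eq_square)
qed

lemma ctn_exp: "y > 0 \<Longrightarrow> ctn y = 1 + 2 / (exp (2 * y) - 1)"
proof -
  assume y: "y > 0"
  have e: "exp (2 * y) = exp y * exp y" by (simp add: exp_add[symmetric])
  have p: "exp y > 1" using y by simp
  have "exp y * exp y > 1" using less_1_mult[OF p p] .
  hence d: "exp y * exp y - 1 \<noteq> 0" by simp
  show ?thesis unfolding ctn_def cosh_def sinh_def e exp_minus using p d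
    by (simp add: field_simps)
qed

lemma plus_exp: "y > 0 \<Longrightarrow> 1 / (exp (2 * y) + 1) = ctn y / 2 - ctn (2 * y) + 1 / 2"
proof -
  assume y: "y > 0"
  define a where "a = exp (2 * y)"
  have a: "a > 1" using y by (simp add: a_def)
  have a2: "exp (2 * (2 * y)) = a * a" by (simp add: a_def exp_add[symmetric])
  have "ctn y / 2 - ctn (2 * y) + 1 / 2 = (1 + 2 / (a - 1)) / 2 - (1 + 2 / (a * a - 1)) + 1 / 2"
  proof -
    have y2: "2 * y > 0" using y by simp
    show ?thesis unfolding ctn_exp[OF y] ctn_exp[OF y2] a2 a_def ..
  qed
  also have "\<dots> = 1 / (a + 1)"
  proof -
    have "a - 1 \<noteq> 0" "a * a - 1 \<noteq> 0" "a + 1 \<noteq> 0" using a less_1_mult[OF a a] by auto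
    moreover have "a * a - 1 = (a - 1) * (a + 1)" by (simp add: algebra_simps)
    ultimately show ?thesis by (simp add: divide_simps) (simp add: algebra_simps)
  qed
  finally show ?thesis by (simp add: a_def)
qed

lemma sums_eq_fun: "f sums a \<Longrightarrow> f = g \<Longrightarrow> a = b \<Longrightarrow> g sums b" by simp

lemma alg7:
  fixes M a b t :: real assumes M: "M > 0"
  shows "(64 / pi) * ((a / (4 * M\<^sup>2) - b / (16 * M^4)
        + (pi * (2 * M) * t - 1) / (2 * (2 * M)\<^sup>2) / (16 * M^4))
        - a / 4 * (1 / M\<^sup>2) + b / 16 * (1 / M^4) + (1 / M^6) / 128) = t / M^5"
proof -
  have "(a / (4 * M\<^sup>2) - b / (16 * M^4) + (pi * (2 * M) * t - 1) / (2 * (2 * M)\<^sup>2) / (16 * M^4))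
        - a / 4 * (1 / M\<^sup>2) + b / 16 * (1 / M^4) + (1 / M^6) / 128
      = (pi * (2 * M) * t - 1) / (2 * (2 * M)\<^sup>2) / (16 * M^4) + (1 / M^6) / 128"
    by simp
  also have "\<dots> = pi * t / (64 * M^5)"
    using M by (simp add: divide_simps) (simp add: algebra_simps eval_nat_numeral)
  finally show ?thesis by simp
qed

lemma main_rel:
  defines "g2 \<equiv> \<lambda>n::nat. ctn (pi * real n) / (real n)^5"
    and "g3 \<equiv> \<lambda>n::nat. ctn (pi * (2 * real n)) / (real n)^5"
  shows "\<exists>A2 A3. (\<lambda>k. g2 (Suc k)) sums A2 \<and> (\<lambda>k. g3 (Suc k)) sums A3 \<and> 37 * A2 - 2 * A3 = 5 * pi^5 / 42"
proof -
  define g1 where "g1 n = ctn (pi * real n / 2) / (real n)^5" for n :: nat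
  define gX where "gX n = Xf n / (real n)^5" for n :: nat
  obtain S2 where r2: "(\<lambda>k. pi * Xf (Suc k) / (4 * (real (Suc k))^5) - 1 / (2 * (real (Suc k))^6)) sums S2"
    and c2: "(\<lambda>l. (pi\<^sup>2 / 6) / (4 * (real (Suc l))^4) - pi * ctn (pi * real (Suc l)) / (16 * (real (Suc l))^5)) sums S2"
    using relII by blast
  obtain S1 where r1: "(\<lambda>k. pi * ctn (pi * real (Suc k) / 2) / (4 * (real (Suc k))^5) - 1 / (2 * (real (Suc k))^6)) sums S1"
    and c1: "(\<lambda>l. (pi^4 / 90) / (4 * (real (Suc l))\<^sup>2) - (pi\<^sup>2 / 6) / (16 * (real (Suc l))^4)
        + (pi * (2 * real (Suc l)) * ctn (pi * (2 * real (Suc l))) - 1) / (2 * (2 * real (Suc l))\<^sup>2) / (16 * (real (Suc l))^4)) sums S1"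
    using relI by blast
  have pi0: "pi \<noteq> 0" by simp
  define B where "B = (4 / pi) * (S2 + (pi^6 / 945) / 2)"
  define A2 where "A2 = (16 / pi) * ((pi\<^sup>2 / 6) / 4 * (pi^4 / 90) - S2)"
  define A1 where "A1 = (4 / pi) * (S1 + (pi^6 / 945) / 2)"
  define A3 where "A3 = (64 / pi) * (S1 - (pi^4 / 90) / 4 * (pi\<^sup>2 / 6) + (pi\<^sup>2 / 6) / 16 * (pi^4 / 90) + (pi^6 / 945) / 128)"
  have sX: "(\<lambda>k. gX (Suc k)) sums B"
  proof (rule sums_eq_fun)
    show "(\<lambda>k. (4 / pi) * ((pi * Xf (Suc k) / (4 * (real (Suc k))^5) - 1 / (2 * (real (Suc k))^6)) + 1 / (real (Suc k))^6 / 2))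
       sums ((4 / pi) * (S2 + (pi^6 / 945) / 2))"
      by (intro sums_mult sums_add sums_divide r2 z6_sums)
    show "(\<lambda>k. (4 / pi) * ((pi * Xf (Suc k) / (4 * (real (Suc k))^5) - 1 / (2 * (real (Suc k))^6)) + 1 / (real (Suc k))^6 / 2))
       = (\<lambda>k. gX (Suc k))"
      unfolding gX_def by (rule ext) (simp add: field_simps)
  qed (simp add: B_def)
  have s1: "(\<lambda>k. g1 (Suc k)) sums A1"
  proof (rule sums_eq_fun)
    show "(\<lambda>k. (4 / pi) * ((pi * ctn (pi * real (Suc k) / 2) / (4 * (real (Suc k))^5) - 1 / (2 * (real (Suc k))^6)) + 1 / (real (Suc k))^6 / 2))
       sums ((4 / pi) * (S1 + (pi^6 / 945) / 2))"
      by (intro sums_mult sums_add sums_divide r1 z6_sums)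
    show "(\<lambda>k. (4 / pi) * ((pi * ctn (pi * real (Suc k) / 2) / (4 * (real (Suc k))^5) - 1 / (2 * (real (Suc k))^6)) + 1 / (real (Suc k))^6 / 2))
       = (\<lambda>k. g1 (Suc k))"
      unfolding g1_def by (rule ext) (simp add: field_simps)
  qed (simp add: A1_def)
  have s2: "(\<lambda>k. g2 (Suc k)) sums A2"
  proof (rule sums_eq_fun)
    show "(\<lambda>l. (16 / pi) * ((pi\<^sup>2 / 6) / 4 * (1 / (real (Suc l))^4) - ((pi\<^sup>2 / 6) / (4 * (real (Suc l))^4) - pi * ctn (pi * real (Suc l)) / (16 * (real (Suc l))^5))))
       sums ((16 / pi) * ((pi\<^sup>2 / 6) / 4 * (pi^4 / 90) - S2))"
      by (intro sums_mult sums_diff c2 z4_sums)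
    show "(\<lambda>l. (16 / pi) * ((pi\<^sup>2 / 6) / 4 * (1 / (real (Suc l))^4) - ((pi\<^sup>2 / 6) / (4 * (real (Suc l))^4) - pi * ctn (pi * real (Suc l)) / (16 * (real (Suc l))^5))))
       = (\<lambda>k. g2 (Suc k))"
      unfolding g2_def by (rule ext) (simp add: field_simps)
  qed (simp add: A2_def)
  have s3: "(\<lambda>k. g3 (Suc k)) sums A3"
  proof (rule sums_eq_fun)
    show "(\<lambda>l. (64 / pi) * (((pi^4 / 90) / (4 * (real (Suc l))\<^sup>2) - (pi\<^sup>2 / 6) / (16 * (real (Suc l))^4)
        + (pi * (2 * real (Suc l)) * ctn (pi * (2 * real (Suc l))) - 1) / (2 * (2 * real (Suc l))\<^sup>2) / (16 * (real (Suc l))^4))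
        - (pi^4 / 90) / 4 * (1 / (real (Suc l))\<^sup>2) + (pi\<^sup>2 / 6) / 16 * (1 / (real (Suc l))^4) + (1 / (real (Suc l))^6) / 128))
       sums ((64 / pi) * (S1 - (pi^4 / 90) / 4 * (pi\<^sup>2 / 6) + (pi\<^sup>2 / 6) / 16 * (pi^4 / 90) + (pi^6 / 945) / 128))"
      by (intro sums_mult sums_add sums_diff sums_divide c1 z6_sums z4_sums z2_sums)
    show "(\<lambda>l. (64 / pi) * (((pi^4 / 90) / (4 * (real (Suc l))\<^sup>2) - (pi\<^sup>2 / 6) / (16 * (real (Suc l))^4)
        + (pi * (2 * real (Suc l)) * ctn (pi * (2 * real (Suc l))) - 1) / (2 * (2 * real (Suc l))\<^sup>2) / (16 * (real (Suc l))^4))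
        - (pi^4 / 90) / 4 * (1 / (real (Suc l))\<^sup>2) + (pi\<^sup>2 / 6) / 16 * (1 / (real (Suc l))^4) + (1 / (real (Suc l))^6) / 128))
       = (\<lambda>k. g3 (Suc k))"
      unfolding g3_def by (intro ext alg7) simp
  qed (simp add: A3_def)
  have t2: "g2 sums A2" using s2 sums_Suc_iff[of g2 A2] by (simp add: g2_def)
  have t1: "g1 sums A1" using s1 sums_Suc_iff[of g1 A1] by (simp add: g1_def)
  have t3: "g3 sums A3" using s3 sums_Suc_iff[of g3 A3] by (simp add: g3_def)
  have tX: "gX sums B" using sX sums_Suc_iff[of gX B] by (simp add: gX_def)
  have ev2: "(\<lambda>j. g2 (2 * j)) sums (A3 / 32)"
  proof -
    have "(\<lambda>j. g2 (2 * j)) = (\<lambda>j. g3 j / 32)" unfolding g2_def g3_def by (rule ext) simp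
    thus ?thesis using sums_divide[OF t3, of 32] by simp
  qed
  have ev1: "(\<lambda>j. g1 (2 * j)) sums (A2 / 32)"
  proof -
    have "(\<lambda>j. g1 (2 * j)) = (\<lambda>j. g2 j / 32)" unfolding g1_def g2_def by (rule ext) simp
    thus ?thesis using sums_divide[OF t2, of 32] by simp
  qed
  have evX: "(\<lambda>j. gX (2 * j)) sums (A2 / 32)"
  proof -
    have "(\<lambda>j. gX (2 * j)) = (\<lambda>j. g2 j / 32)" unfolding gX_def g2_def Xf_def by (rule ext) simp
    thus ?thesis using sums_divide[OF t2, of 32] by simp
  qed
  have od2: "(\<lambda>j. g2 (2 * j + 1)) sums (A2 - A3 / 32)" by (rule parity_split[OF t2 ev2])
  have od1: "(\<lambda>j. g1 (2 * j + 1)) sums (A1 - A2 / 32)" by (rule parity_split[OF t1 ev1])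
  have odX: "(\<lambda>j. gX (2 * j + 1)) sums (2 * (A2 - A3 / 32) - (A1 - A2 / 32))"
  proof -
    have "gX (2 * j + 1) = 2 * g2 (2 * j + 1) - g1 (2 * j + 1)" for j
    proof -
      define n where "n = 2 * j + 1"
      have o: "odd n" by (simp add: n_def)
      have y: "pi * real n / 2 \<noteq> 0" by (simp add: n_def)
      have "Xf n = 2 * ctn (pi * real n) - ctn (pi * real n / 2)"
        using o tanh_ctn[OF y] by (simp add: Xf_def)
      thus ?thesis unfolding n_def[symmetric] gX_def g2_def g1_def by (simp add: diff_divide_distrib)
    qed
    hence "(\<lambda>j. gX (2 * j + 1)) = (\<lambda>j. 2 * g2 (2 * j + 1) - g1 (2 * j + 1))" by (rule ext)
    thus ?thesis using sums_diff[OF sums_mult[OF od2, of 2] od1] by simp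
  qed
  have tX2: "gX sums (A2 / 32 + (2 * (A2 - A3 / 32) - (A1 - A2 / 32)))"
    by (rule parity_combine[OF evX odX])
  have eqB: "B = A2 / 32 + (2 * (A2 - A3 / 32) - (A1 - A2 / 32))"
    using sums_unique2[OF tX tX2] .
  have lin: "4 * A2 - A3 + 16 * A1 + 16 * B = 5 * pi^5 / 42"
    unfolding A1_def A2_def A3_def B_def using pi0
    by (simp add: field_simps) (simp add: algebra_simps eval_nat_numeral)
  have l2: "4 * A2 - A3 + 16 * A1 + 16 * (A2 / 32 + (2 * (A2 - A3 / 32) - (A1 - A2 / 32))) = 5 * pi^5 / 42"
    using lin unfolding eqB .
  have "37 * A2 - 2 * A3 = 5 * pi^5 / 42"
  proof -
    have "4 * A2 - A3 + 16 * A1 + 16 * (A2 / 32 + (2 * (A2 - A3 / 32) - (A1 - A2 / 32))) = 37 * A2 - 2 * A3"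
      by (simp add: algebra_simps)
    thus ?thesis using l2 by simp
  qed
  thus ?thesis using s2 s3 by blast
qed

lemma algP:
  fixes N E c :: real assumes "N > 0" "E > 1" "c = 1 + 2 / (E - 1)"
  shows "1 / (N^5 * (E - 1)) = c / N^5 / 2 - 1 / N^5 / 2"
proof -
  have "E - 1 \<noteq> 0" "N^5 \<noteq> 0" using assms by auto
  thus ?thesis unfolding assms(3) by (simp add: divide_simps)
qed

theorem mainTheorem2:
  shows "(\<Sum>n. 1 / (real (Suc n)) ^ 5) =
    pi ^ 5 / 294
    - 72 / 35 * (\<Sum>n. 1 / ((real (Suc n)) ^ 5 * (exp (2 * pi * real (Suc n)) - 1)))
    - 2 / 35 * (\<Sum>n. 1 / ((real (Suc n)) ^ 5 * (exp (2 * pi * real (Suc n)) + 1)))"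
proof -
  obtain A2 A3 where s2: "(\<lambda>k. ctn (pi * real (Suc k)) / (real (Suc k))^5) sums A2"
    and s3: "(\<lambda>k. ctn (pi * (2 * real (Suc k))) / (real (Suc k))^5) sums A3"
    and eq: "37 * A2 - 2 * A3 = 5 * pi^5 / 42"
    using main_rel by auto
  define Z5 where "Z5 = (\<Sum>n. 1 / (real (Suc n)) ^ 5)"
  have z5: "(\<lambda>n. 1 / (real (Suc n)) ^ 5) sums Z5"
    unfolding Z5_def by (rule summable_sums, rule psum) simp
  have P: "(\<lambda>n. 1 / ((real (Suc n)) ^ 5 * (exp (2 * pi * real (Suc n)) - 1))) sums (A2 / 2 - Z5 / 2)"
  proof (rule sums_eq_fun)
    show "(\<lambda>n. ctn (pi * real (Suc n)) / (real (Suc n))^5 / 2 - 1 / (real (Suc n))^5 / 2) sums (A2 / 2 - Z5 / 2)"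
      by (intro sums_diff sums_divide s2 z5)
    show "(\<lambda>n. ctn (pi * real (Suc n)) / (real (Suc n))^5 / 2 - 1 / (real (Suc n))^5 / 2) =
      (\<lambda>n. 1 / ((real (Suc n)) ^ 5 * (exp (2 * pi * real (Suc n)) - 1)))"
    proof
      fix n
      have y: "pi * real (Suc n) > 0" by simp
      have e: "exp (2 * pi * real (Suc n)) > 1" by simp
      show "ctn (pi * real (Suc n)) / (real (Suc n))^5 / 2 - 1 / (real (Suc n))^5 / 2 =
        1 / ((real (Suc n)) ^ 5 * (exp (2 * pi * real (Suc n)) - 1))"
        by (rule algP[symmetric]) (use ctn_exp[OF y] e in \<open>simp_all add: mult.assoc\<close>)
    qed
  qed simp
  have Q: "(\<lambda>n. 1 / ((real (Suc n)) ^ 5 * (exp (2 * pi * real (Suc n)) + 1))) sums (A2 / 2 - A3 + Z5 / 2)"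
  proof (rule sums_eq_fun)
    show "(\<lambda>n. ctn (pi * real (Suc n)) / (real (Suc n))^5 / 2 - ctn (pi * (2 * real (Suc n))) / (real (Suc n))^5
         + 1 / (real (Suc n))^5 / 2) sums (A2 / 2 - A3 + Z5 / 2)"
      by (intro sums_add sums_diff sums_divide s2 s3 z5)
    show "(\<lambda>n. ctn (pi * real (Suc n)) / (real (Suc n))^5 / 2 - ctn (pi * (2 * real (Suc n))) / (real (Suc n))^5
         + 1 / (real (Suc n))^5 / 2) =
      (\<lambda>n. 1 / ((real (Suc n)) ^ 5 * (exp (2 * pi * real (Suc n)) + 1)))"
    proof
      fix n
      have y: "pi * real (Suc n) > 0" by simp
      have a1: "2 * (pi * real (Suc n)) = 2 * pi * real (Suc n)" by simp
      have a2: "2 * (pi * real (Suc n)) = pi * (2 * real (Suc n))" by simp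
      have "1 / (exp (2 * pi * real (Suc n)) + 1) = ctn (pi * real (Suc n)) / 2 - ctn (pi * (2 * real (Suc n))) + 1 / 2"
        using plus_exp[OF y] unfolding a1 a2[symmetric] a1 .
      hence "1 / ((real (Suc n)) ^ 5 * (exp (2 * pi * real (Suc n)) + 1)) =
         (ctn (pi * real (Suc n)) / 2 - ctn (pi * (2 * real (Suc n))) + 1 / 2) / (real (Suc n))^5"
        by (metis divide_divide_eq_left mult.commute)
      thus "ctn (pi * real (Suc n)) / (real (Suc n))^5 / 2 - ctn (pi * (2 * real (Suc n))) / (real (Suc n))^5
         + 1 / (real (Suc n))^5 / 2 = 1 / ((real (Suc n)) ^ 5 * (exp (2 * pi * real (Suc n)) + 1))"
        by (simp add: add_divide_distrib diff_divide_distrib)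
    qed
  qed simp
  have P': "(\<Sum>n. 1 / ((real (Suc n)) ^ 5 * (exp (2 * pi * real (Suc n)) - 1))) = A2 / 2 - Z5 / 2"
    using P by (rule sums_unique[symmetric])
  have Q': "(\<Sum>n. 1 / ((real (Suc n)) ^ 5 * (exp (2 * pi * real (Suc n)) + 1))) = A2 / 2 - A3 + Z5 / 2"
    using Q by (rule sums_unique[symmetric])
  show ?thesis unfolding Z5_def[symmetric] P' Q' using eq by (simp add: field_simps)
qed


end
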